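(* Let $m,n$ be positive integers with $m \neq n$ and $\gcd(m,n) > 1$. Then $K_m \otimes K_n$ is not a circulant graph.
   Context: Graphs have no multiple edges but may have loops. The tensor product $G \otimes H$ of graphs $G$ and $H$ has vertex set $V(G)\times V(H)$, with $(g,h)$ adjacent to $(g',h')$ if and only if $g$ is adjacent to $g'$ in $G$ and $h$ is adjacent to $h'$ in $H$. For an integer $n\ge 1$ and a set $S$ of integers, the circulant graph $C_nS$ has vertex set $\{0,1,\dots,n-1\}$, with $i$ adjacent to $j$ if and only if $i-j \equiv \pm s \pmod n$ for some $s\in S$. A graph is circulant if it is isomorphic to some $C_nS$; equivalently, if its automorphism group contains a cyclic subgroup acting transitively on the vertices. $K_n$ denotes the complete graph on $n$ vertices (no loops). *)

theory Defs
  imports "HOL-Number_Theory.Cong"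
begin

text \<open>A graph (possibly with loops, no multiple edges) is given by a vertex set and a
symmetric adjacency relation on it.\<close>

type_synonym 'a graph = "'a set \<times> ('a \<Rightarrow> 'a \<Rightarrow> bool)"

definition verts :: "'a graph \<Rightarrow> 'a set" where "verts G = fst G"
definition adj :: "'a graph \<Rightarrow> 'a \<Rightarrow> 'a \<Rightarrow> bool" where "adj G = snd G"

definition complete_graph :: "nat \<Rightarrow> nat graph" where
  "complete_graph n = ({0..<n}, \<lambda>i j. i \<noteq> j)"

definition tensor_graph :: "'a graph \<Rightarrow> 'b graph \<Rightarrow> ('a \<times> 'b) graph" where
  "tensor_graph G H = (verts G \<times> verts H,
     \<lambda>(g,h) (g',h'). adj G g g' \<and> adj H h h')"

definition circulant_graph :: "nat \<Rightarrow> int set \<Rightarrow> nat graph" where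
  "circulant_graph n S = ({0..<n},
     \<lambda>i j. \<exists>s\<in>S. [int i - int j = s] (mod int n) \<or> [int i - int j = - s] (mod int n))"

definition graph_iso :: "'a graph \<Rightarrow> 'b graph \<Rightarrow> bool" where
  "graph_iso G H \<longleftrightarrow> (\<exists>f. bij_betw f (verts G) (verts H) \<and>
     (\<forall>u\<in>verts G. \<forall>v\<in>verts G. adj G u v \<longleftrightarrow> adj H (f u) (f v)))"

definition is_circulant :: "'a graph \<Rightarrow> bool" where
  "is_circulant G \<longleftrightarrow> (\<exists>n\<ge>1. \<exists>S. graph_iso G (circulant_graph n S))"

end

theory Submission
  imports Defs
begin

definition tadj :: "nat \<times> nat \<Rightarrow> nat \<times> nat \<Rightarrow> bool" where
  "tadj u v \<longleftrightarrow> fst u \<noteq> fst v \<and> snd u \<noteq> snd v"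

definition cnb :: "(nat \<times> nat) set \<Rightarrow> nat \<times> nat \<Rightarrow> nat \<times> nat \<Rightarrow> (nat \<times> nat) set" where
  "cnb V u v = {w\<in>V. \<not> tadj u w \<and> \<not> tadj v w}"

lemma cnb_row:
  assumes "i<m" "j<n" "j'<n" "j\<noteq>j'"
  shows "cnb ({0..<m}\<times>{0..<n}) (i,j) (i,j') = {i}\<times>{0..<n}"
  using assms unfolding cnb_def tadj_def by auto

lemma cnb_col:
  assumes "i<m" "i'<m" "j<n" "i\<noteq>i'"
  shows "cnb ({0..<m}\<times>{0..<n}) (i,j) (i',j) = {0..<m}\<times>{j}"
  using assms unfolding cnb_def tadj_def by auto

lemma cnb_image:
  assumes "bij_betw \<phi> V V" "\<forall>u\<in>V. \<forall>v\<in>V. tadj u v \<longleftrightarrow> tadj (\<phi> u) (\<phi> v)" "u\<in>V" "v\<in>V"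
  shows "\<phi> ` cnb V u v = cnb V (\<phi> u) (\<phi> v)"
proof
  show "\<phi> ` cnb V u v \<subseteq> cnb V (\<phi> u) (\<phi> v)" using assms by (auto simp: cnb_def bij_betw_def)
  show "cnb V (\<phi> u) (\<phi> v) \<subseteq> \<phi> ` cnb V u v"
  proof
    fix w' assume w': "w' \<in> cnb V (\<phi> u) (\<phi> v)"
    then have "w' \<in> V" by (simp add: cnb_def)
    then obtain w where w: "w\<in>V" "w' = \<phi> w" using assms(1) by (metis bij_betw_def imageE)
    then show "w' \<in> \<phi> ` cnb V u v" using w' assms by (auto simp: cnb_def)
  qed
qed

lemma card_cnb:
  assumes "bij_betw \<phi> V V" "\<forall>u\<in>V. \<forall>v\<in>V. tadj u v \<longleftrightarrow> tadj (\<phi> u) (\<phi> v)" "u\<in>V" "v\<in>V"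
  shows "card (cnb V (\<phi> u) (\<phi> v)) = card (cnb V u v)"
proof -
  have "inj_on \<phi> (cnb V u v)"
    using bij_betw_imp_inj_on[OF assms(1)] by (rule inj_on_subset) (auto simp: cnb_def)
  then show ?thesis using cnb_image[OF assms] card_image by metis
qed

lemma row_pres:
  fixes m n :: nat
  assumes "m\<noteq>n" "bij_betw \<phi> ({0..<m}\<times>{0..<n}) ({0..<m}\<times>{0..<n})"
    "\<forall>u\<in>{0..<m}\<times>{0..<n}. \<forall>v\<in>{0..<m}\<times>{0..<n}. tadj u v \<longleftrightarrow> tadj (\<phi> u) (\<phi> v)"
    "i<m" "j<n" "j'<n"
  shows "fst (\<phi> (i,j)) = fst (\<phi> (i,j'))"
proof (rule ccontr)
  let ?V = "{0..<m}\<times>{0..<n}"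
  assume ne: "fst (\<phi> (i,j)) \<noteq> fst (\<phi> (i,j'))"
  hence jj: "j\<noteq>j'" by auto
  have inV: "(i,j)\<in>?V" "(i,j')\<in>?V" using assms by auto
  have pV: "\<phi>(i,j)\<in>?V" "\<phi>(i,j')\<in>?V" using inV bij_betw_apply[OF assms(2)] by auto
  have "\<not> tadj (i,j) (i,j')" by (simp add: tadj_def)
  hence "\<not> tadj (\<phi> (i,j)) (\<phi> (i,j'))" using inV assms(3) by blast
  hence eq2: "snd (\<phi> (i,j)) = snd (\<phi> (i,j'))" using ne by (simp add: tadj_def)
  obtain x y x' where xy: "\<phi>(i,j) = (x,y)" "\<phi>(i,j') = (x',y)" using eq2
    by (metis prod.collapse)
  have "x \<noteq> x'" using ne xy by simp
  have "cnb ?V (\<phi>(i,j)) (\<phi>(i,j')) = {0..<m}\<times>{y}"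
    unfolding xy by (rule cnb_col) (use pV xy \<open>x\<noteq>x'\<close> in auto)
  hence c1: "card (cnb ?V (\<phi>(i,j)) (\<phi>(i,j'))) = m" by simp
  have "card (cnb ?V (i,j) (i,j')) = n" using cnb_row[OF assms(4,5,6) jj] by simp
  with c1 card_cnb[OF assms(2,3) inV] assms(1) show False by simp
qed

lemma col_pres:
  fixes m n :: nat
  assumes "m\<noteq>n" "bij_betw \<phi> ({0..<m}\<times>{0..<n}) ({0..<m}\<times>{0..<n})"
    "\<forall>u\<in>{0..<m}\<times>{0..<n}. \<forall>v\<in>{0..<m}\<times>{0..<n}. tadj u v \<longleftrightarrow> tadj (\<phi> u) (\<phi> v)"
    "i<m" "i'<m" "j<n"
  shows "snd (\<phi> (i,j)) = snd (\<phi> (i',j))"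
proof (rule ccontr)
  let ?V = "{0..<m}\<times>{0..<n}"
  assume ne: "snd (\<phi> (i,j)) \<noteq> snd (\<phi> (i',j))"
  hence ii: "i\<noteq>i'" by auto
  have inV: "(i,j)\<in>?V" "(i',j)\<in>?V" using assms by auto
  have pV: "\<phi>(i,j)\<in>?V" "\<phi>(i',j)\<in>?V" using inV bij_betw_apply[OF assms(2)] by auto
  have "\<not> tadj (i,j) (i',j)" by (simp add: tadj_def)
  hence "\<not> tadj (\<phi> (i,j)) (\<phi> (i',j))" using inV assms(3) by blast
  hence eq2: "fst (\<phi> (i,j)) = fst (\<phi> (i',j))" using ne by (simp add: tadj_def)
  obtain x y y' where xy: "\<phi>(i,j) = (x,y)" "\<phi>(i',j) = (x,y')" using eq2
    by (metis prod.collapse)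
  have "y \<noteq> y'" using ne xy by simp
  have "cnb ?V (\<phi>(i,j)) (\<phi>(i',j)) = {x}\<times>{0..<n}"
    unfolding xy by (rule cnb_row) (use pV xy \<open>y\<noteq>y'\<close> in auto)
  hence c1: "card (cnb ?V (\<phi>(i,j)) (\<phi>(i',j))) = n" by simp
  have "card (cnb ?V (i,j) (i',j)) = m" using cnb_col[OF assms(4,5,6) ii] by simp
  with c1 card_cnb[OF assms(2,3) inV] assms(1) show False by simp
qed

lemma iter_prod:
  assumes "\<forall>i<m. \<forall>j<n. \<phi> (i,j) = (\<alpha> i, \<beta> j)" "\<forall>i<m. \<alpha> i < m" "\<forall>j<n. \<beta> j < n" "i<m" "j<n"
  shows "(\<phi>^^k) (i,j) = ((\<alpha>^^k) i, (\<beta>^^k) j) \<and> (\<alpha>^^k) i < m \<and> (\<beta>^^k) j < n"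
  by (induction k) (use assms in auto)

lemma pigeon:
  fixes g :: "nat \<Rightarrow> nat"
  assumes "\<forall>i<m. g i < m" "x<m"
  shows "\<exists>a b. a<b \<and> b\<le>m \<and> (g^^b) x = (g^^a) x"
proof -
  have bnd: "(g^^k) x < m" for k by (induction k) (use assms in auto)
  have "\<not> inj_on (\<lambda>k. (g^^k) x) {0..m}"
  proof
    assume "inj_on (\<lambda>k. (g^^k) x) {0..m}"
    then have "card {0..m} \<le> card {0..<m}" by (rule card_inj_on_le) (use bnd in auto)
    then show False by simp
  qed
  then obtain a b where ab: "a\<in>{0..m}" "b\<in>{0..m}" "a\<noteq>b" "(g^^a) x = (g^^b) x"
    by (auto simp: inj_on_def)
  show ?thesis
  proof (cases "a<b")
    case True then show ?thesis using ab by (intro exI[of _ a] exI[of _ b]) auto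
  next
    case False then have "b<a" using ab by auto
    then show ?thesis using ab by (intro exI[of _ b] exI[of _ a]) auto
  qed
qed

lemma period_step:
  fixes g :: "nat \<Rightarrow> nat"
  assumes "a<b" "(g^^b) x = (g^^a) x" "a\<le>k"
  shows "(g^^(k+(b-a))) x = (g^^k) x"
proof -
  have "(g^^(k+(b-a))) x = (g^^((k-a)+b)) x" using assms by (simp add: algebra_simps)
  also have "\<dots> = (g^^(k-a)) ((g^^b) x)" by (simp add: funpow_add)
  also have "\<dots> = (g^^(k-a)) ((g^^a) x)" using assms by simp
  also have "\<dots> = (g^^((k-a)+a)) x" by (simp add: funpow_add)
  also have "\<dots> = (g^^k) x" using assms by simp
  finally show ?thesis .
qed

lemma period:
  fixes g :: "nat \<Rightarrow> nat"
  assumes "a<b" "(g^^b) x = (g^^a) x" "a\<le>k"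
  shows "(g^^(k + c*(b-a))) x = (g^^k) x"
proof (induction c)
  case 0 show ?case by simp
next
  case (Suc c)
  have e: "k + Suc c*(b-a) = (k + c*(b-a)) + (b-a)" by simp
  have "(g^^(k + Suc c*(b-a))) x = (g^^((k + c*(b-a)) + (b-a))) x" by (simp only: e)
  also have "\<dots> = (g^^(k + c*(b-a))) x" by (rule period_step) (use assms in auto)
  finally show ?case using Suc by simp
qed


lemma tensor_adj:
  "adj (tensor_graph (complete_graph m) (complete_graph n)) u v = tadj u v"
  by (cases u, cases v) (simp add: adj_def tensor_graph_def complete_graph_def verts_def tadj_def)

lemma tensor_verts:
  "verts (tensor_graph (complete_graph m) (complete_graph n)) = {0..<m}\<times>{0..<n}"
  by (simp add: tensor_graph_def complete_graph_def verts_def)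

lemma shift_cong:
  fixes N x y :: nat
  shows "[int ((x+1) mod N) - int ((y+1) mod N) = int x - int y] (mod int N)"
proof -
  have "(int ((x+1) mod N) - int ((y+1) mod N)) mod int N
      = ((int x + 1) mod int N - (int y + 1) mod int N) mod int N" by (simp add: of_nat_mod ac_simps)
  also have "\<dots> = ((int x + 1) - (int y + 1)) mod int N" by (rule mod_diff_eq)
  finally show ?thesis by (simp add: cong_def)
qed

theorem lemma3:
  fixes m n :: nat
  assumes "m \<ge> 1" and "n \<ge> 1" and "m \<noteq> n" and "gcd m n > 1"
  shows "\<not> is_circulant (tensor_graph (complete_graph m) (complete_graph n))"
proof
  let ?V = "{0..<m}\<times>{0..<n}"
  assume "is_circulant (tensor_graph (complete_graph m) (complete_graph n))"
  then obtain N S where N1: "N\<ge>1" and iso: "graph_iso (tensor_graph (complete_graph m) (complete_graph n)) (circulant_graph N S)"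
    unfolding is_circulant_def by blast
  define cadj where "cadj x y = (\<exists>s\<in>S. [int x - int y = s] (mod int N) \<or> [int x - int y = - s] (mod int N))" for x y :: nat
  obtain f where bf: "bij_betw f ?V {0..<N}" and af: "\<forall>u\<in>?V. \<forall>v\<in>?V. tadj u v \<longleftrightarrow> cadj (f u) (f v)"
    using iso unfolding graph_iso_def tensor_verts tensor_adj
    by (auto simp: circulant_graph_def verts_def adj_def cadj_def)
  define \<rho> where "\<rho> x = (x+1) mod N" for x :: nat
  have cshift: "cadj (\<rho> x) (\<rho> y) = cadj x y" for x y
  proof -
    have k: "[int (\<rho> x) - int (\<rho> y) = int x - int y] (mod int N)" unfolding \<rho>_def by (rule shift_cong)
    have "[int (\<rho> x) - int (\<rho> y) = t] (mod int N) \<longleftrightarrow> [int x - int y = t] (mod int N)" for t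
      using k by (meson cong_sym cong_trans)
    then show ?thesis unfolding cadj_def by simp
  qed
  have rho_in: "\<rho> ` {0..<N} \<subseteq> {0..<N}" using N1 by (auto simp: \<rho>_def)
  have rho_inj: "inj_on \<rho> {0..<N}"
  proof (rule inj_onI)
    fix x y assume xy: "x \<in> {0..<N}" "y \<in> {0..<N}" "\<rho> x = \<rho> y"
    then have "[x + 1 = y + 1] (mod N)" by (simp add: \<rho>_def cong_def)
    then have "[x = y] (mod N)" by (metis cong_add_rcancel_nat)
    then show "x = y" using xy by (simp add: cong_def)
  qed
  have rho_bij: "bij_betw \<rho> {0..<N} {0..<N}"
    using endo_inj_surj[OF _ rho_in rho_inj] rho_inj by (simp add: bij_betw_def)
  define \<psi> where "\<psi> = inv_into ?V f"
  have psi_bij: "bij_betw \<psi> {0..<N} ?V" unfolding \<psi>_def by (rule bij_betw_inv_into[OF bf])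
  have f_psi: "f (\<psi> y) = y" if "y < N" for y
    unfolding \<psi>_def using bij_betw_inv_into_right[OF bf] that by simp
  have psi_f: "\<psi> (f u) = u" if "u \<in> ?V" for u
    unfolding \<psi>_def using bij_betw_inv_into_left[OF bf that] .
  have fV: "f u < N" if "u \<in> ?V" for u using bij_betw_apply[OF bf that] by simp
  define \<phi> where "\<phi> = \<psi> \<circ> (\<rho> \<circ> f)"
  have phi_bij: "bij_betw \<phi> ?V ?V"
    unfolding \<phi>_def by (rule bij_betw_trans[OF bij_betw_trans[OF bf rho_bij] psi_bij])
  have phiV: "\<phi> u \<in> ?V" if "u \<in> ?V" for u using bij_betw_apply[OF phi_bij that] .
  have rhoN: "\<rho> x < N" for x using N1 by (simp add: \<rho>_def)
  have phi_adj: "\<forall>u\<in>?V. \<forall>v\<in>?V. tadj u v \<longleftrightarrow> tadj (\<phi> u) (\<phi> v)"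
  proof (intro ballI)
    fix u v assume uv: "u \<in> ?V" "v \<in> ?V"
    have "tadj (\<phi> u) (\<phi> v) \<longleftrightarrow> cadj (f (\<phi> u)) (f (\<phi> v))" using af phiV uv by blast
    also have "\<dots> \<longleftrightarrow> cadj (\<rho> (f u)) (\<rho> (f v))" by (simp add: \<phi>_def f_psi rhoN)
    also have "\<dots> \<longleftrightarrow> tadj u v" using cshift af uv by blast
    finally show "tadj u v \<longleftrightarrow> tadj (\<phi> u) (\<phi> v)" by simp
  qed
  have phi_iter: "(\<phi>^^k) u = \<psi> ((f u + k) mod N)" if "u \<in> ?V" for u k
  proof (induction k)
    case 0 show ?case using that fV psi_f by simp
  next
    case (Suc k)
    have "(\<phi>^^Suc k) u = \<phi> (\<psi> ((f u + k) mod N))" using Suc by simp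
    also have "\<dots> = \<psi> (\<rho> ((f u + k) mod N))" using N1 by (simp add: \<phi>_def f_psi)
    also have "\<rho> ((f u + k) mod N) = (f u + Suc k) mod N" by (simp add: \<rho>_def mod_Suc_eq)
    finally show ?case .
  qed
  define \<alpha> where "\<alpha> i = fst (\<phi> (i,0))" for i
  define \<beta> where "\<beta> j = snd (\<phi> (0,j))" for j
  have m0: "0 < m" and n0: "0 < n" using assms by auto
  have phi_split: "\<forall>i<m. \<forall>j<n. \<phi> (i,j) = (\<alpha> i, \<beta> j)"
  proof (intro allI impI)
    fix i j assume ij: "i<m" "j<n"
    have "fst (\<phi> (i,j)) = \<alpha> i" unfolding \<alpha>_def
      by (rule row_pres[OF assms(3) phi_bij phi_adj ij n0])
    moreover have "snd (\<phi> (i,j)) = \<beta> j" unfolding \<beta>_def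
      by (rule col_pres[OF assms(3) phi_bij phi_adj ij(1) m0 ij(2)])
    ultimately show "\<phi> (i,j) = (\<alpha> i, \<beta> j)" by (metis prod.collapse)
  qed
  have alpha_b: "\<forall>i<m. \<alpha> i < m"
  proof (intro allI impI)
    fix i assume "i<m"
    then have "\<phi> (i,0) \<in> ?V" using phiV n0 by simp
    then show "\<alpha> i < m" unfolding \<alpha>_def by (cases "\<phi> (i,0)") simp
  qed
  have beta_b: "\<forall>j<n. \<beta> j < n"
  proof (intro allI impI)
    fix j assume "j<n"
    then have "\<phi> (0,j) \<in> ?V" using phiV m0 by simp
    then show "\<beta> j < n" unfolding \<beta>_def by (cases "\<phi> (0,j)") simp
  qed
  note it = iter_prod[OF phi_split alpha_b beta_b m0 n0]
  obtain a1 b1 where ab1: "a1<b1" "b1\<le>m" "(\<alpha>^^b1) 0 = (\<alpha>^^a1) 0" using pigeon[OF alpha_b m0] by blast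
  obtain a2 b2 where ab2: "a2<b2" "b2\<le>n" "(\<beta>^^b2) 0 = (\<beta>^^a2) 0" using pigeon[OF beta_b n0] by blast
  define A where "A = max a1 a2"
  define p1 where "p1 = b1 - a1"
  define p2 where "p2 = b2 - a2"
  define L where "L = lcm p1 p2"
  obtain c1 where c1: "L = c1 * p1" unfolding L_def by (metis dvd_lcm1 dvd_def mult.commute)
  obtain c2 where c2: "L = c2 * p2" unfolding L_def by (metis dvd_lcm2 dvd_def mult.commute)
  have "(\<alpha>^^(A + c1*p1)) 0 = (\<alpha>^^A) 0" unfolding p1_def by (rule period[OF ab1(1) ab1(3)]) (simp add: A_def)
  moreover have "(\<beta>^^(A + c2*p2)) 0 = (\<beta>^^A) 0" unfolding p2_def by (rule period[OF ab2(1) ab2(3)]) (simp add: A_def)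
  ultimately have "(\<alpha>^^(A + L)) 0 = (\<alpha>^^A) 0" "(\<beta>^^(A + L)) 0 = (\<beta>^^A) 0"
    using c1 c2 by simp_all
  then have "(\<phi>^^(A+L)) (0,0) = (\<phi>^^A) (0,0)" using it[of "A+L"] it[of A] by simp
  moreover have u0: "(0,0) \<in> ?V" using m0 n0 by simp
  ultimately have "\<psi> ((f (0,0) + (A+L)) mod N) = \<psi> ((f (0,0) + A) mod N)"
    using phi_iter[OF u0, of "A+L"] phi_iter[OF u0, of A] by simp
  moreover have "inj_on \<psi> {0..<N}" using psi_bij bij_betw_imp_inj_on by blast
  ultimately have "(f (0,0) + A + L) mod N = (f (0,0) + A) mod N"
    using N1 by (auto simp: inj_on_def add.assoc)
  then have "[(f (0,0) + A) + L = f (0,0) + A] (mod N)" by (simp add: cong_def)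
  then have "[L = 0] (mod N)" by (simp add: cong_add_lcancel_0_nat)
  then have NL: "N dvd L" by (simp add: cong_0_iff)
  have "card ?V = N" using bij_betw_same_card[OF bf] by simp
  then have Nmn: "N = m*n" by simp
  have p1p: "0 < p1" "p1 \<le> m" using ab1 by (auto simp: p1_def)
  have p2p: "0 < p2" "p2 \<le> n" using ab2 by (auto simp: p2_def)
  have Lpos: "0 < L" unfolding L_def using p1p p2p lcm_pos_nat by blast
  have h1: "m*n \<le> L" using NL Lpos Nmn by (simp add: dvd_imp_le)
  have h2: "L \<le> p1*p2"
  proof -
    have "p1*p2 = gcd p1 p2 * L" unfolding L_def by (rule prod_gcd_lcm_nat)
    moreover have "gcd p1 p2 \<ge> 1" using p1p by (simp add: Suc_le_eq)
    ultimately show ?thesis using mult_le_mono1[of 1 "gcd p1 p2" L] by simp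
  qed
  have h3: "p1*p2 \<le> m*n" using p1p p2p by (simp add: mult_le_mono)
  have e1: "L = m*n" using h1 h2 h3 by linarith
  have e2: "p1*p2 = m*n" using h1 h2 h3 by linarith
  have pm: "p1 = m"
  proof (rule ccontr)
    assume "p1 \<noteq> m" then have "p1 < m" using p1p by simp
    then have "p1*p2 < m*n" using mult_less_le_imp_less[of p1 m p2 n] p2p by simp
    then show False using e2 by simp
  qed
  have pn: "p2 = n" using e2 pm m0 by simp
  have "lcm m n = m*n" using e1 unfolding L_def pm pn .
  moreover have "m*n = gcd m n * lcm m n" by (rule prod_gcd_lcm_nat)
  ultimately have "1 * (m*n) = gcd m n * (m*n)" by (metis mult_1)
  moreover have "m*n > 0" using m0 n0 by simp
  ultimately have "gcd m n = 1" by (metis mult_right_cancel less_irrefl)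
  then show False using assms(4) by simp
qed

end
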